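(* Let $X$ be a normal Galilean manifold with principal $H$-bundle $\pi:P\to X$ and Cartan connection $\begin{pmatrix}0&0&0\\ \tau&0&0\\ \omega&\phi&\Pi\end{pmatrix}$. Let $(t,x,y)$ be normal coordinates on an open set of $X$, with local section $h$ of $P$ satisfying $h^*\tau=dt$, $h^*\omega=dx-y\,dt$ and $h^*\phi\equiv dy \pmod{dt,dx}$, and write $$h^*\phi = dy + \Gamma(t,x,y)\,dt + N(t,x,y)\,(dx-y\,dt)$$ for an $\mathbb{R}^n$-valued function $\Gamma=(\Gamma^j)$ and a matrix-valued function $N$. Then the geodesics of $X$ (in this coordinate domain) are the solutions of the system of second order ordinary differential equations $$\frac{d^2x^j}{dt^2}+\Gamma^j\!\left(t,x,\frac{dx}{dt}\right)=0,\qquad j=1,\dots,n,$$ that is, up to reparametrization, they are exactly the curves $t\mapsto (t,x(t),\tfrac{dx}{dt}(t))$ with $x(t)$ solving this system.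
   Context: $Gal_n$ is the matrix group of matrices $\begin{pmatrix}1&0&0\\ t&1&0\\ x&y&A\end{pmatrix}$ ($t\in\mathbb{R}$, $x,y\in\mathbb{R}^n$, $A\in GL_n(\mathbb{R})$), with Lie algebra $\mathfrak{gal}_n$ of matrices $\begin{pmatrix}0&0&0\\ a&0&0\\ b&c&B\end{pmatrix}$, and $H$ is the subgroup of matrices $\mathrm{diag}(1,1,A)$. The left Maurer–Cartan form of $Gal_n$ is $\omega_G=\begin{pmatrix}0&0&0\\ dt&0&0\\ A^{-1}(dx-y\,dt)&A^{-1}dy&A^{-1}dA\end{pmatrix}$. The homogeneous space $Gal_n/H$ is identified with the first jet bundle $J^1(\mathbb{R},\mathbb{R}^n)\cong\mathbb{R}\times\mathbb{R}^n\times\mathbb{R}^n$ with coordinates $(t,x,y)$ via the coset of the matrix above. A curve $\tilde\sigma$ in $J^1(\mathbb{R},\mathbb{R}^n)$ is a straight line if $\tilde\sigma^*(dx-y\,dt)=0$, $\tilde\sigma^*(dy)=0$ and $\tilde\sigma^*(dt)\neq0$. A Galilean manifold is a manifold $X$ with a principal $H$-bundle $\pi:P\to X$ and a Cartan connection $\theta=\begin{pmatrix}0&0&0\\ \tau&0&0\\ \omega&\phi&\Pi\end{pmatrix}$, i.e. a $\mathfrak{gal}_n$-valued one-form on $P$ which is a pointwise isomorphism $T_pP\to\mathfrak{gal}_n$, satisfies $R_h^*\theta=\mathrm{Ad}(h^{-1})\theta$ for $h\in H$, and $\theta(X^\dagger)=X$ for fundamental vector fields $X^\dagger$, $X\in\mathfrak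 h$. It is normal if $d\tau=0$ and $d\omega+\Pi\wedge\omega+\phi\wedge\tau=0$. Development: for a curve $\rho:[0,1]\to P$, its development is the unique curve $\tilde\rho:[0,1]\to Gal_n$ with $\rho^*\theta=\tilde\rho^*\omega_G$ and $\tilde\rho(0)=e$. For a curve $\sigma$ in $X$, take any lift $\rho$ to $P$; the projection of $\tilde\rho$ to $Gal_n/H=J^1(\mathbb{R},\mathbb{R}^n)$ is independent of the lift and is called the development $\tilde\sigma$ of $\sigma$. A geodesic of $X$ is a (germ of a) curve in $X$ whose development is contained in a straight line. *)

theory Defs
  imports "HOL-Analysis.Analysis"
begin

text \<open>Local model.  A point of the coordinate domain (and of the jet space
J^1(R,R^n)) is a triple (t, x, y) with t real and x, y in R^n.
Tangent vectors have the same shape (dt, dx, dy).\<close>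

type_synonym 'n pt = "real \<times> (real^'n) \<times> (real^'n)"

definition tc :: "'n pt \<Rightarrow> real" where "tc p = fst p"
definition xc :: "'n pt \<Rightarrow> real^'n" where "xc p = fst (snd p)"
definition yc :: "'n pt \<Rightarrow> real^'n" where "yc p = snd (snd p)"

text \<open>Exterior derivative of a (vector valued) one-form alpha, given as
alpha p v (linear in v), evaluated at p on the pair (v, w).\<close>
definition ext_d :: "('n::finite pt \<Rightarrow> 'n pt \<Rightarrow> 'w::real_normed_vector) \<Rightarrow> 'n pt \<Rightarrow> 'n pt \<Rightarrow> 'n pt \<Rightarrow> 'w" where
  "ext_d \<alpha> p v w =
     frechet_derivative (\<lambda>q. \<alpha> q w) (at p) v - frechet_derivative (\<lambda>q. \<alpha> q v) (at p) w"

text \<open>Normality of the Cartan connection, pulled back by the section h: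
d tau = 0 and d omega + Pi /\ omega + phi /\ tau = 0.\<close>
definition normal_pullback ::
  "'n::finite pt set \<Rightarrow> ('n pt \<Rightarrow> 'n pt \<Rightarrow> real) \<Rightarrow> ('n pt \<Rightarrow> 'n pt \<Rightarrow> real^'n)
   \<Rightarrow> ('n pt \<Rightarrow> 'n pt \<Rightarrow> real^'n) \<Rightarrow> ('n pt \<Rightarrow> 'n pt \<Rightarrow> real^'n^'n) \<Rightarrow> bool" where
  "normal_pullback U \<tau> \<omega> \<phi> Pm \<longleftrightarrow>
     (\<forall>p\<in>U. \<forall>v w.
        ext_d \<tau> p v w = 0 \<and>
        ext_d \<omega> p v w
          + ((Pm p v) *v (\<omega> p w) - (Pm p w) *v (\<omega> p v))
          + (\<tau> p w *\<^sub>R \<phi> p v - \<tau> p v *\<^sub>R \<phi> p w) = 0)"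

text \<open>An element of Gal_n is represented by its entries (T, X, Y, A) (A invertible);
the condition is rho^* theta = D^* omega_G with the given Maurer-Cartan form
omega_G = (dT, A^-1 (dX - Y dT), A^-1 dY, A^-1 dA), and D(0) = e.\<close>
definition is_development ::
  "('n::finite pt \<Rightarrow> 'n pt \<Rightarrow> real) \<Rightarrow> ('n pt \<Rightarrow> 'n pt \<Rightarrow> real^'n)
   \<Rightarrow> ('n pt \<Rightarrow> 'n pt \<Rightarrow> real^'n) \<Rightarrow> ('n pt \<Rightarrow> 'n pt \<Rightarrow> real^'n^'n)
   \<Rightarrow> (real \<Rightarrow> 'n pt) \<Rightarrow> (real \<Rightarrow> real \<times> (real^'n) \<times> (real^'n) \<times> (real^'n^'n)) \<Rightarrow> bool" where
  "is_development \<tau> \<omega> \<phi> Pm \<sigma> D \<longleftrightarrow>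
     D 0 = (0, 0, 0, mat 1) \<and>
     (\<forall>s\<in>{0..1}.
        let (T, X, Y, A) = D s;
            v = vector_derivative \<sigma> (at s within {0..1}) in
        invertible A \<and>
        (\<exists>T' X' Y' A'.
           (D has_vector_derivative (T', X', Y', A')) (at s within {0..1}) \<and>
           T' = \<tau> (\<sigma> s) v \<and>
           matrix_inv A *v (X' - T' *\<^sub>R Y) = \<omega> (\<sigma> s) v \<and>
           matrix_inv A *v Y' = \<phi> (\<sigma> s) v \<and>
           matrix_inv A ** A' = Pm (\<sigma> s) v))"

text \<open>Projection Gal_n -> Gal_n/H = J^1(R,R^n): (T,X,Y,A) |-> (T,X,Y).\<close>
definition proj_J1 :: "real \<times> (real^'n) \<times> (real^'n) \<times> (real^'n^'n::finite) \<Rightarrow> 'n pt" where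
  "proj_J1 g = (fst g, fst (snd g), fst (snd (snd g)))"

definition straight_line :: "(real \<Rightarrow> 'n::finite pt) \<Rightarrow> real set \<Rightarrow> bool" where
  "straight_line l I \<longleftrightarrow>
     is_interval I \<and> open I \<and> I \<noteq> {} \<and>
     (\<forall>u\<in>I. \<exists>l'. (l has_vector_derivative l') (at u) \<and>
        xc l' - tc l' *\<^sub>R yc (l u) = 0 \<and> yc l' = 0 \<and> tc l' \<noteq> 0)"

definition is_geodesic ::
  "('n::finite pt \<Rightarrow> 'n pt \<Rightarrow> real) \<Rightarrow> ('n pt \<Rightarrow> 'n pt \<Rightarrow> real^'n)
   \<Rightarrow> ('n pt \<Rightarrow> 'n pt \<Rightarrow> real^'n) \<Rightarrow> ('n pt \<Rightarrow> 'n pt \<Rightarrow> real^'n^'n)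
   \<Rightarrow> (real \<Rightarrow> 'n pt) \<Rightarrow> bool" where
  "is_geodesic \<tau> \<omega> \<phi> Pm \<sigma> \<longleftrightarrow>
     (\<exists>D. is_development \<tau> \<omega> \<phi> Pm \<sigma> D \<and>
        (\<exists>l I. straight_line l I \<and> (proj_J1 \<circ> D) ` {0..1} \<subseteq> l ` I))"

end

theory Submission imports Defs begin

lemma exp_int:
  fixes Lw s :: real assumes Lw: "Lw > 0" and s: "0 \<le> s"
  shows "integral {0..s} (\<lambda>u. exp (Lw * u)) = (exp (Lw * s) - 1) / Lw"
proof -
  have "((\<lambda>u. exp (Lw * u)) has_integral (exp (Lw * s)/Lw - exp (Lw*0)/Lw)) {0..s}"
    apply (rule fundamental_theorem_of_calculus[OF s])
    using Lw by (auto intro!: derivative_eq_intros simp: has_real_derivative_iff_has_vector_derivative[symmetric])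
  then show ?thesis using Lw by (simp add: integral_unique diff_divide_distrib)
qed

lemma ode_exists:
  fixes M :: "real \<Rightarrow> 'a::euclidean_space" and prod :: "'b::euclidean_space \<Rightarrow> 'a \<Rightarrow> 'b"
  assumes bb: "bounded_bilinear prod" and cM: "continuous_on {0..1} M"
  shows "\<exists>A. A 0 = A0 \<and> (\<forall>s\<in>{0..1}. (A has_vector_derivative prod (A s) (M s)) (at s within {0..1}))"
proof -
  interpret bounded_bilinear prod by (rule bb)
  obtain KM where KM: "KM > 0" "\<And>s. s \<in> {0..1} \<Longrightarrow> norm (M s) \<le> KM"
    using compact_imp_bounded[OF compact_continuous_image[OF cM compact_Icc]]
    by (auto simp: bounded_pos)
  obtain KB where KB: "KB > 0" "\<And>a b. norm (prod a b) \<le> norm a * norm b * KB"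
    using pos_bounded by blast
  define Lw where "Lw = 2*KB*KM + 1"
  have Lw: "Lw > 0" using KB KM by (simp add: Lw_def add_pos_nonneg)
  define c where "c = KB*KM/Lw"
  have c: "0 \<le> c" "c < 1" using KB KM Lw by (auto simp: c_def Lw_def)
  define Gf where "Gf f s = exp(-Lw * s) *\<^sub>R (A0 + integral {0..s} (\<lambda>u. exp(Lw * u) *\<^sub>R prod (apply_bcontfun f u) (M u)))"
    for f :: "real \<Rightarrow>\<^sub>C 'b" and s
  have cont_int: "continuous_on {0..1} (\<lambda>u. exp(Lw * u) *\<^sub>R prod (apply_bcontfun f u) (M u))" for f
    by (intro continuous_intros continuous_on continuous_on_subset[OF cM]) auto
  have int_int: "(\<lambda>u. exp(Lw * u) *\<^sub>R prod (apply_bcontfun f u) (M u)) integrable_on {0..s}" if "s \<in> {0..1}" for f s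
    by (rule integrable_continuous_real, rule continuous_on_subset[OF cont_int]) (use that in auto)
  have cGf: "continuous_on (cbox 0 1) (Gf f)" for f
    unfolding Gf_def cbox_interval
    by (intro continuous_intros indefinite_integral_continuous_1 integrable_continuous_real cont_int)
  have "\<forall>f. \<exists>g::real \<Rightarrow>\<^sub>C 'b. \<forall>x. g x = Gf f (clamp 0 1 x)"
  proof
    fix f
    obtain g :: "real \<Rightarrow>\<^sub>C 'b" where "\<And>x. g x = Gf f (clamp 0 1 x)"
      using continuous_on_cbox_bcontfunE[OF cGf[of f]] by metis
    then show "\<exists>g::real \<Rightarrow>\<^sub>C 'b. \<forall>x. g x = Gf f (clamp 0 1 x)" by blast
  qed
  then obtain G where G: "\<And>f x. apply_bcontfun (G f) x = Gf f (clamp 0 1 x)" by metis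
  have contr: "dist (Gf f s) (Gf g s) \<le> c * dist f g" if s: "s \<in> {0..1}" for f g s
  proof -
    define d where "d = dist f g"
    have "Gf f s - Gf g s = exp(-Lw * s) *\<^sub>R integral {0..s} (\<lambda>u. exp(Lw * u) *\<^sub>R prod (apply_bcontfun f u) (M u) - exp(Lw * u) *\<^sub>R prod (apply_bcontfun g u) (M u))"
      unfolding Gf_def integral_diff[OF int_int[OF s] int_int[OF s]] by (simp only: scaleR_add_right scaleR_diff_right) (simp add: algebra_simps)
    also have "\<dots> = exp(-Lw * s) *\<^sub>R integral {0..s} (\<lambda>u. exp(Lw * u) *\<^sub>R prod (apply_bcontfun f u - apply_bcontfun g u) (M u))"
      by (simp add: diff_left scaleR_diff_right)
    finally have eq: "Gf f s - Gf g s = \<dots>" .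
    have "norm (integral {0..s} (\<lambda>u. exp(Lw * u) *\<^sub>R prod (apply_bcontfun f u - apply_bcontfun g u) (M u)))
        \<le> integral {0..s} (\<lambda>u. exp(Lw * u) * (d*KM*KB))"
    proof (rule integral_norm_bound_integral)
      show "(\<lambda>u. exp(Lw * u) *\<^sub>R prod (apply_bcontfun f u - apply_bcontfun g u) (M u)) integrable_on {0..s}"
      proof -
        have "(\<lambda>u. exp(Lw * u) *\<^sub>R prod (apply_bcontfun f u - apply_bcontfun g u) (M u)) = (\<lambda>u. exp(Lw * u) *\<^sub>R prod (apply_bcontfun f u) (M u) - exp(Lw * u) *\<^sub>R prod (apply_bcontfun g u) (M u))"
          by (simp add: fun_eq_iff diff_left scaleR_diff_right)
        then show ?thesis using integrable_diff[OF int_int[OF s] int_int[OF s]] by simp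
      qed
      show "(\<lambda>u. exp(Lw * u) * (d*KM*KB)) integrable_on {0..s}"
        by (intro integrable_continuous_real continuous_intros)
      fix u assume u: "u \<in> {0..s}"
      have "norm (prod (apply_bcontfun f u - apply_bcontfun g u) (M u)) \<le> norm (apply_bcontfun f u - apply_bcontfun g u) * norm (M u) * KB"
        by (rule KB(2))
      also have "\<dots> \<le> d * KM * KB"
      proof -
        have h1: "norm (apply_bcontfun f u - apply_bcontfun g u) \<le> d"
          using dist_bounded[of f u g] unfolding d_def dist_norm .
        have "u \<in> {0..1}" using u s by auto
        then have h2: "norm (M u) \<le> KM" by (rule KM(2))
        show ?thesis
          by (rule mult_right_mono[OF mult_mono[OF h1 h2]]) (use KB(1) in \<open>auto simp: d_def\<close>)
      qed
      finally have h3: "norm (prod (apply_bcontfun f u - apply_bcontfun g u) (M u)) \<le> d * KM * KB" .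
      have "norm (exp(Lw * u) *\<^sub>R prod (apply_bcontfun f u - apply_bcontfun g u) (M u)) = exp(Lw * u) * norm (prod (apply_bcontfun f u - apply_bcontfun g u) (M u))"
        by simp
      also have "\<dots> \<le> exp(Lw * u) * (d*KM*KB)"
        by (rule mult_left_mono[OF h3]) simp
      finally show "norm (exp(Lw * u) *\<^sub>R prod (apply_bcontfun f u - apply_bcontfun g u) (M u)) \<le> exp(Lw * u) * (d*KM*KB)" .
    qed
    also have "\<dots> = (d*KM*KB) * ((exp (Lw * s) - 1) / Lw)"
      using exp_int[OF Lw, of s] s by (simp add: integral_mult_left mult.commute)
    finally have nb: "norm (integral {0..s} (\<lambda>u. exp(Lw * u) *\<^sub>R prod (apply_bcontfun f u - apply_bcontfun g u) (M u))) \<le> (d*KM*KB) * ((exp (Lw * s) - 1) / Lw)" .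
    have "dist (Gf f s) (Gf g s) = exp(-Lw * s) * norm (integral {0..s} (\<lambda>u. exp(Lw * u) *\<^sub>R prod (apply_bcontfun f u - apply_bcontfun g u) (M u)))"
      by (simp add: dist_norm eq)
    also have "\<dots> \<le> exp(-Lw * s) * ((d*KM*KB) * ((exp (Lw * s) - 1) / Lw))"
      by (rule mult_left_mono[OF nb]) simp
    also have "\<dots> = (d*KM*KB) * ((1 - exp(-Lw * s)) / Lw)"
      by (simp add: field_simps exp_minus)
    also have "\<dots> \<le> (d*KM*KB) * (1 / Lw)"
      using KM KB Lw unfolding d_def by (intro mult_left_mono divide_right_mono) auto
    also have "\<dots> = c * dist f g" by (simp add: c_def d_def)
    finally show ?thesis .
  qed
  have "\<forall>f g. dist (G f) (G g) \<le> c * dist f g"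
  proof (intro allI dist_bound)
    fix f g x
    have "clamp 0 1 x \<in> {0..1::real}"
      using clamp_in_interval[of 0 1 x] by (simp add: cbox_interval)
    then show "dist (G f x) (G g x) \<le> c * dist f g" by (simp add: G contr)
  qed
  then obtain f0 where f0: "G f0 = f0" using banach_fix_type[OF c] by blast
  define A where "A s = A0 + integral {0..s} (\<lambda>u. exp(Lw * u) *\<^sub>R prod (apply_bcontfun f0 u) (M u))" for s
  have Af: "A s = exp (Lw * s) *\<^sub>R apply_bcontfun f0 s" if "s \<in> {0..1}" for s
  proof -
    have "apply_bcontfun f0 s = Gf f0 s" using G[of f0 s] that f0 by (simp add: cbox_interval)
    then show ?thesis by (simp add: Gf_def A_def exp_minus)
  qed
  show ?thesis
  proof (intro exI conjI ballI)
    show "A 0 = A0" by (simp add: A_def)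
    fix s :: real assume s: "s \<in> {0..1}"
    have "(A has_vector_derivative exp(Lw * s) *\<^sub>R prod (apply_bcontfun f0 s) (M s)) (at s within {0..1})"
      unfolding A_def
      using has_vector_derivative_add[OF has_vector_derivative_const integral_has_vector_derivative[OF cont_int s]] by simp
    then show "(A has_vector_derivative prod (A s) (M s)) (at s within {0..1})"
      by (simp add: Af[OF s] scaleR_left)
  qed
qed

lemma bb_mm: "bounded_bilinear ((**) :: real^'n::finite^'n \<Rightarrow> real^'n^'n \<Rightarrow> real^'n^'n)"
  unfolding bilinear_conv_bounded_bilinear[symmetric] bilinear_def
  by (auto intro!: linearI simp: matrix_matrix_mult_def vec_eq_iff sum.distrib sum_distrib_left algebra_simps)

lemma minv_left: "invertible (A::real^'n::finite^'n) \<Longrightarrow> matrix_inv A ** A = mat 1"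
  unfolding invertible_def matrix_inv_def by (rule someI2_ex) auto

lemma ode_inv:
  fixes M :: "real \<Rightarrow> real^'n::finite^'n"
  assumes cM: "continuous_on {0..1} M"
  shows "\<exists>A. A 0 = mat 1 \<and> (\<forall>s\<in>{0..1}. invertible (A s) \<and> (A has_vector_derivative (A s ** M s)) (at s within {0..1}))"
proof -
  obtain A where A: "A 0 = mat 1" "\<forall>s\<in>{0..1}. (A has_vector_derivative A s ** M s) (at s within {0..1})"
    using ode_exists[OF bb_mm cM, of "mat 1"] by blast
  have cM2: "continuous_on {0..1} (\<lambda>s. - M s)" using cM by (intro continuous_intros)
  obtain B where B: "B 0 = mat 1" "\<forall>s\<in>{0..1}. (B has_vector_derivative (- M s) ** B s) (at s within {0..1})"
    using ode_exists[OF bounded_bilinear.flip[OF bb_mm] cM2, of "mat 1"] by blast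
  have P: "((\<lambda>s. A s ** B s) has_derivative (\<lambda>h. 0)) (at s within {0..1})" if s: "s \<in> {0..1}" for s
  proof -
    have "((\<lambda>s. A s ** B s) has_vector_derivative (A s ** ((- M s) ** B s) + (A s ** M s) ** B s)) (at s within {0..1})"
      by (rule bounded_bilinear.has_vector_derivative[OF bb_mm]) (use A B s in auto)
    moreover have "A s ** ((- M s) ** B s) + (A s ** M s) ** B s = 0"
      by (simp add: bounded_bilinear.minus_left[OF bb_mm] bounded_bilinear.minus_right[OF bb_mm] matrix_mul_assoc)
    ultimately show ?thesis by (simp add: has_vector_derivative_def)
  qed
  obtain c where c: "\<forall>s\<in>{0..1}. A s ** B s = c"
    using has_derivative_zero_constant[OF convex_real_interval(5) P] by auto
  have AB: "A s ** B s = mat 1" if "s \<in> {0..1}" for s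
    using c that A(1) B(1) by (metis atLeastAtMost_iff matrix_mul_lid order_refl zero_le_one)
  show ?thesis
  proof (intro exI conjI ballI)
    fix s :: real assume s: "s \<in> {0..1}"
    show "invertible (A s)" unfolding invertible_def
      using AB[OF s] matrix_left_right_inverse by blast
    show "(A has_vector_derivative A s ** M s) (at s within {0..1})" using A s by auto
  qed (rule A(1))
qed

lemma tc_deriv: "(f has_vector_derivative v) F \<Longrightarrow> ((\<lambda>s. tc (f s)) has_vector_derivative tc v) F"
  unfolding tc_def by (rule bounded_linear.has_vector_derivative[OF bounded_linear_fst])
lemma xc_deriv: "(f has_vector_derivative v) F \<Longrightarrow> ((\<lambda>s. xc (f s)) has_vector_derivative xc v) F"
  unfolding xc_def by (rule bounded_linear.has_vector_derivative[OF bounded_linear_compose[OF bounded_linear_fst bounded_linear_snd]])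
lemma yc_deriv: "(f has_vector_derivative v) F \<Longrightarrow> ((\<lambda>s. yc (f s)) has_vector_derivative yc v) F"
  unfolding yc_def by (rule bounded_linear.has_vector_derivative[OF bounded_linear_compose[OF bounded_linear_snd bounded_linear_snd]])

lemma uniq01: "s \<in> {0..1} \<Longrightarrow> (f has_vector_derivative a) (at s within {0..1::real}) \<Longrightarrow> (f has_vector_derivative b) (at s within {0..1}) \<Longrightarrow> a = b"
  using vector_derivative_unique_within_closed_interval[of 0 1 s f a b] by (simp add: cbox_interval)

lemma straight_const:
  assumes "straight_line (l :: real \<Rightarrow> 'n::finite pt) I"
  shows "\<exists>y0 c. \<forall>u\<in>I. yc (l u) = y0 \<and> xc (l u) - tc (l u) *\<^sub>R y0 = c"
proof -
  have I: "convex I" using assms is_interval_convex unfolding straight_line_def by auto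
  have der: "\<forall>u\<in>I. \<exists>l'. (l has_vector_derivative l') (at u) \<and> xc l' - tc l' *\<^sub>R yc (l u) = 0 \<and> yc l' = 0 \<and> tc l' \<noteq> 0"
    using assms unfolding straight_line_def by auto
  have "\<exists>c. \<forall>u\<in>I. yc (l u) = c"
  proof (rule has_derivative_zero_constant[OF I])
    fix u assume "u \<in> I"
    then obtain l' where "(l has_vector_derivative l') (at u)" "yc l' = 0" using der by blast
    then have "((\<lambda>s. yc (l s)) has_vector_derivative 0) (at u within I)"
      using yc_deriv has_vector_derivative_at_within by metis
    then show "((\<lambda>s. yc (l s)) has_derivative (\<lambda>h. 0)) (at u within I)" by (simp add: has_vector_derivative_def)
  qed
  then obtain y0 where y0: "\<forall>u\<in>I. yc (l u) = y0" by blast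
  have "\<exists>c. \<forall>u\<in>I. xc (l u) - tc (l u) *\<^sub>R y0 = c"
  proof (rule has_derivative_zero_constant[OF I])
    fix u assume u: "u \<in> I"
    then obtain l' where l': "(l has_vector_derivative l') (at u)" "xc l' - tc l' *\<^sub>R yc (l u) = 0" using der by blast
    have "((\<lambda>s. xc (l s) - tc (l s) *\<^sub>R y0) has_vector_derivative (xc l' - tc l' *\<^sub>R y0)) (at u)"
      by (intro has_vector_derivative_diff xc_deriv[OF l'(1)]
          bounded_linear.has_vector_derivative[OF bounded_linear_scaleR_left tc_deriv[OF l'(1)]])
    moreover have "xc l' - tc l' *\<^sub>R y0 = 0" using l'(2) y0 u by simp
    ultimately have "((\<lambda>s. xc (l s) - tc (l s) *\<^sub>R y0) has_vector_derivative 0) (at u within I)"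
      using has_vector_derivative_at_within by metis
    then show "((\<lambda>s. xc (l s) - tc (l s) *\<^sub>R y0) has_derivative (\<lambda>h. 0)) (at u within I)" by (simp add: has_vector_derivative_def)
  qed
  then show ?thesis using y0 by blast
qed

lemma geo_Z:
  assumes "is_geodesic \<tau> \<omega> \<phi> Pm \<sigma>" and s: "s \<in> {0..1}"
  shows "\<omega> (\<sigma> s) (vector_derivative \<sigma> (at s within {0..1})) = 0 \<and> \<phi> (\<sigma> s) (vector_derivative \<sigma> (at s within {0..1})) = 0"
proof -
  obtain D l I where dev: "is_development \<tau> \<omega> \<phi> Pm \<sigma> D" and sl: "straight_line l I"
    and img: "(proj_J1 \<circ> D) ` {0..1} \<subseteq> l ` I"
    using assms unfolding is_geodesic_def by blast
  obtain y0 c where yc0: "\<forall>u\<in>I. yc (l u) = y0 \<and> xc (l u) - tc (l u) *\<^sub>R y0 = c"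
    using straight_const[OF sl] by blast
  have D0: "D 0 = (0,0,0,mat 1)" using dev unfolding is_development_def by simp
  have onl: "\<exists>u\<in>I. proj_J1 (D s') = l u" if "s' \<in> {0..1}" for s'
  proof -
    have "proj_J1 (D s') \<in> l ` I" using img that unfolding image_subset_iff by auto
    then show ?thesis by (auto simp: image_iff)
  qed
  obtain u0 where u0: "u0 \<in> I" "proj_J1 (D 0) = l u0" using onl[of 0] by auto
  have l0: "l u0 = (0,0,0)" using u0(2) D0 by (simp add: proj_J1_def)
  have "y0 = 0" "c = 0" using yc0 u0(1) l0 by (force simp: tc_def xc_def yc_def)+
  then have DXY: "fst (snd (D s')) = 0 \<and> fst (snd (snd (D s'))) = 0" if s'01: "s' \<in> {0..1}" for s'
  proof -
    obtain u where u: "u \<in> I" "proj_J1 (D s') = l u" using onl[OF s'01] by blast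
    have "fst (snd (proj_J1 (D s'))) = 0" "snd (snd (proj_J1 (D s'))) = 0"
      unfolding u(2) using yc0 u(1) \<open>y0 = 0\<close> \<open>c = 0\<close> by (auto simp: xc_def yc_def tc_def)
    then show ?thesis by (simp add: proj_J1_def)
  qed
  obtain T X Y A where Ds: "D s = (T,X,Y,A)" by (cases "D s") auto
  define v where "v = vector_derivative \<sigma> (at s within {0..1})"
  obtain T' X' Y' A' where
    dD: "(D has_vector_derivative (T', X', Y', A')) (at s within {0..1})" and
    o1: "matrix_inv A *v (X' - T' *\<^sub>R Y) = \<omega> (\<sigma> s) v" and
    p1: "matrix_inv A *v Y' = \<phi> (\<sigma> s) v"
    using dev[unfolded is_development_def, THEN conjunct2, rule_format, OF s] by (auto simp: Ds Let_def v_def)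
  have dX: "((\<lambda>s. fst (snd (D s))) has_vector_derivative X') (at s within {0..1})"
    using bounded_linear.has_vector_derivative[OF bounded_linear_compose[OF bounded_linear_fst bounded_linear_snd] dD] by simp
  have dY: "((\<lambda>s. fst (snd (snd (D s)))) has_vector_derivative Y') (at s within {0..1})"
    using bounded_linear.has_vector_derivative[OF bounded_linear_compose[OF bounded_linear_fst bounded_linear_compose[OF bounded_linear_snd bounded_linear_snd]] dD] by simp
  have dX0: "((\<lambda>s. fst (snd (D s))) has_vector_derivative 0) (at s within {0..1})"
    by (rule has_vector_derivative_transform[OF s _ has_vector_derivative_const]) (use DXY in auto)
  have dY0: "((\<lambda>s. fst (snd (snd (D s)))) has_vector_derivative 0) (at s within {0..1})"
    by (rule has_vector_derivative_transform[OF s _ has_vector_derivative_const]) (use DXY in auto)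
  have "X' = 0" using uniq01[OF s dX dX0] .
  moreover have "Y' = 0" using uniq01[OF s dY dY0] .
  moreover have "Y = 0" using DXY[OF s] Ds by simp
  ultimately show ?thesis using o1 p1 by (simp add: v_def)
qed

theorem mainTheorem2:
  fixes U :: "'n::finite pt set"
    and \<tau> :: "'n pt \<Rightarrow> 'n pt \<Rightarrow> real"
    and \<omega> \<phi> :: "'n pt \<Rightarrow> 'n pt \<Rightarrow> real^'n"
    and Pm :: "'n pt \<Rightarrow> 'n pt \<Rightarrow> real^'n^'n"
    and \<Gamma> :: "'n pt \<Rightarrow> real^'n"
    and N :: "'n pt \<Rightarrow> real^'n^'n"
    and \<sigma> :: "real \<Rightarrow> 'n pt"
  assumes U_open: "open U"
    and tau_h: "\<And>p v. \<tau> p v = tc v"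
    and omega_h: "\<And>p v. \<omega> p v = xc v - tc v *\<^sub>R yc p"
    and phi_h: "\<And>p v. \<phi> p v = yc v + tc v *\<^sub>R \<Gamma> p + N p *v (xc v - tc v *\<^sub>R yc p)"
    and Pi_lin: "\<And>p. p \<in> U \<Longrightarrow> linear (Pm p)"
    and Pi_diff: "\<And>v. (\<lambda>p. Pm p v) differentiable_on U"
    and Gamma_cont: "continuous_on U \<Gamma>"
    and N_cont: "continuous_on U N"
    and normal: "normal_pullback U \<tau> \<omega> \<phi> Pm"
    and sigma_U: "\<sigma> ` {0..1} \<subseteq> U"
    and sigma_C1: "\<sigma> C1_differentiable_on {0..1}"
    and sigma_imm: "\<And>s. s \<in> {0..1} \<Longrightarrow> vector_derivative \<sigma> (at s within {0..1}) \<noteq> 0"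
  shows "is_geodesic \<tau> \<omega> \<phi> Pm \<sigma> \<longleftrightarrow>
    (\<exists>(r :: real \<Rightarrow> real) (x :: real \<Rightarrow> real^'n) xd xdd.
       (\<forall>s\<in>{0..1}. \<exists>r'. (r has_real_derivative r') (at s within {0..1}) \<and> r' \<noteq> 0) \<and>
       (\<forall>t\<in>r ` {0..1}.
          (x has_vector_derivative xd t) (at t within r ` {0..1}) \<and>
          (xd has_vector_derivative xdd t) (at t within r ` {0..1}) \<and>
          xdd t + \<Gamma> (t, x t, xd t) = 0) \<and>
       (\<forall>s\<in>{0..1}. \<sigma> s = (r s, x (r s), xd (r s))))"
proof -
  obtain D\<sigma> where dS: "\<forall>x\<in>{0..1}. (\<sigma> has_vector_derivative D\<sigma> x) (at x)" and cD: "continuous_on {0..1} D\<sigma>"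
    using sigma_C1 unfolding C1_differentiable_on_def by blast
  have dSw: "(\<sigma> has_vector_derivative D\<sigma> s) (at s within S)" if "s \<in> {0..1}" for s S
    using dS that has_vector_derivative_at_within by blast
  have vd: "vector_derivative \<sigma> (at s within {0..1}) = D\<sigma> s" if "s \<in> {0..1}" for s
    using vector_derivative_within_closed_interval[of 0 1 s \<sigma> "D\<sigma> s"] dSw that by auto
  have cS: "continuous_on {0..1} \<sigma>"
    using dS by (metis continuous_at_imp_continuous_on has_vector_derivative_continuous)
  have DS0: "D\<sigma> s \<noteq> 0" if "s \<in> {0..1}" for s using sigma_imm[OF that] vd[OF that] by simp
  define Z where "Z \<longleftrightarrow> (\<forall>s\<in>{0..1}. \<omega> (\<sigma> s) (D\<sigma> s) = 0 \<and> \<phi> (\<sigma> s) (D\<sigma> s) = 0)"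
  have G2Z: "Z" if "is_geodesic \<tau> \<omega> \<phi> Pm \<sigma>"
    unfolding Z_def using geo_Z[OF that] vd by metis
  have Z2G: "is_geodesic \<tau> \<omega> \<phi> Pm \<sigma>" if Z: Z
  proof -
    define M where "M s = tc (D\<sigma> s) *\<^sub>R N (\<sigma> s)" for s
    have cN: "continuous_on {0..1} (\<lambda>s. N (\<sigma> s))"
      using continuous_on_compose2[OF N_cont cS sigma_U] .
    have cM: "continuous_on {0..1} M"
      unfolding M_def tc_def by (intro continuous_intros cD cN)
    have PmM: "Pm (\<sigma> s) (D\<sigma> s) = M s" if s: "s \<in> {0..1}" for s
    proof -
      define p where "p = \<sigma> s"
      define v where "v = D\<sigma> s"
      have pU: "p \<in> U" using sigma_U s p_def by auto
      have om0: "\<omega> p v = 0" and ph0: "\<phi> p v = 0" using Z s unfolding Z_def p_def v_def by auto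
      have d1: "((\<lambda>q. \<omega> q w) has_derivative (\<lambda>h. - (tc w *\<^sub>R yc h))) (at p)" for w
        unfolding omega_h yc_def by (auto intro!: derivative_eq_intros)
      have eom: "ext_d \<omega> p v w = tc v *\<^sub>R yc w - tc w *\<^sub>R yc v" for w
        unfolding ext_d_def frechet_derivative_at[OF d1[of w], symmetric] frechet_derivative_at[OF d1[of v], symmetric]
        by simp
      have "Pm p v *v e = (tc v *\<^sub>R N p) *v e" for e
      proof -
        define w :: "'n pt" where "w = (0, e, 0)"
        have "ext_d \<omega> p v w + ((Pm p v) *v (\<omega> p w) - (Pm p w) *v (\<omega> p v))
                + (\<tau> p w *\<^sub>R \<phi> p v - \<tau> p v *\<^sub>R \<phi> p w) = 0"
          using normal pU unfolding normal_pullback_def by blast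
        moreover have "ext_d \<omega> p v w = 0" unfolding eom by (simp add: w_def tc_def yc_def)
        moreover have "\<omega> p w = e" by (simp add: omega_h w_def tc_def xc_def)
        moreover have "\<phi> p w = N p *v e" by (simp add: phi_h w_def tc_def xc_def yc_def)
        moreover have "\<tau> p w = 0" by (simp add: tau_h w_def tc_def)
        ultimately have "Pm p v *v e - \<tau> p v *\<^sub>R (N p *v e) = 0" using om0 ph0 by simp
        then show ?thesis by (simp add: scaleR_matrix_vector_assoc tau_h)
      qed
      then show ?thesis unfolding M_def p_def[symmetric] v_def[symmetric] by (simp add: matrix_eq)
    qed
    obtain A where A0: "A 0 = mat 1" and
      AD: "\<forall>s\<in>{0..1}. invertible (A s) \<and> (A has_vector_derivative (A s ** M s)) (at s within {0..1})"
      using ode_inv[OF cM] by blast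
    define D where "D s = (tc (\<sigma> s) - tc (\<sigma> 0), (0::real^'n), (0::real^'n), A s)" for s
    define l :: "real \<Rightarrow> 'n pt" where "l u = (u, 0, 0)" for u
    have dev: "is_development \<tau> \<omega> \<phi> Pm \<sigma> D"
      unfolding is_development_def
    proof (intro conjI ballI)
      show "D 0 = (0, 0, 0, mat 1)" by (simp add: D_def A0)
      fix s :: real assume s: "s \<in> {0..1}"
      have dT: "((\<lambda>s. tc (\<sigma> s) - tc (\<sigma> 0)) has_vector_derivative tc (D\<sigma> s)) (at s within {0..1})"
        using has_vector_derivative_diff[OF tc_deriv[OF dSw[OF s]] has_vector_derivative_const] by simp
      have dD: "(D has_vector_derivative (tc (D\<sigma> s), 0, 0, A s ** M s)) (at s within {0..1})"
        unfolding D_def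
        by (intro has_vector_derivative_Pair dT has_vector_derivative_const) (use AD s in auto)
      have inv: "invertible (A s)" using AD s by auto
      have "matrix_inv (A s) ** (A s ** M s) = Pm (\<sigma> s) (D\<sigma> s)"
        by (simp add: matrix_mul_assoc minv_left[OF inv] PmM[OF s])
      then show "let (T, X, Y, A) = D s; v = vector_derivative \<sigma> (at s within {0..1}) in
        invertible A \<and>
        (\<exists>T' X' Y' A'.
           (D has_vector_derivative (T', X', Y', A')) (at s within {0..1}) \<and>
           T' = \<tau> (\<sigma> s) v \<and>
           matrix_inv A *v (X' - T' *\<^sub>R Y) = \<omega> (\<sigma> s) v \<and>
           matrix_inv A *v Y' = \<phi> (\<sigma> s) v \<and>
           matrix_inv A ** A' = Pm (\<sigma> s) v)"
      proof -
        have ex: "\<exists>X' Y' A'. (D has_vector_derivative (tc (D\<sigma> s), X', Y', A')) (at s within {0..1}) \<and>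
           matrix_inv (A s) *v X' = 0 \<and> matrix_inv (A s) *v Y' = 0 \<and> matrix_inv (A s) ** A' = Pm (\<sigma> s) (D\<sigma> s)"
          by (rule exI[of _ 0], rule exI[of _ 0], rule exI[of _ "A s ** M s"])
             (simp add: dD \<open>matrix_inv (A s) ** (A s ** M s) = Pm (\<sigma> s) (D\<sigma> s)\<close>)
        show ?thesis using ex inv Z s unfolding Z_def by (auto simp: D_def Let_def vd[OF s] tau_h)
      qed
    qed
    have sl: "straight_line l UNIV"
      unfolding straight_line_def
    proof (intro conjI ballI)
      fix u :: real
      have "(l has_vector_derivative (1, 0, 0)) (at u)"
        unfolding l_def by (intro has_vector_derivative_Pair has_vector_derivative_id has_vector_derivative_const)
      then show "\<exists>l'. (l has_vector_derivative l') (at u) \<and> xc l' - tc l' *\<^sub>R yc (l u) = 0 \<and> yc l' = 0 \<and> tc l' \<noteq> 0"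
        by (intro exI[of _ "(1,0,0)"]) (simp add: l_def tc_def xc_def yc_def)
    qed auto
    have "(proj_J1 \<circ> D) ` {0..1} \<subseteq> l ` UNIV"
      by (auto simp: D_def l_def proj_J1_def image_iff)
    then show ?thesis unfolding is_geodesic_def using dev sl by blast
  qed
  have Z2R: "\<exists>(r :: real \<Rightarrow> real) (x :: real \<Rightarrow> real^'n) xd xdd.
       (\<forall>s\<in>{0..1}. \<exists>r'. (r has_real_derivative r') (at s within {0..1}) \<and> r' \<noteq> 0) \<and>
       (\<forall>t\<in>r ` {0..1}.
          (x has_vector_derivative xd t) (at t within r ` {0..1}) \<and>
          (xd has_vector_derivative xdd t) (at t within r ` {0..1}) \<and>
          xdd t + \<Gamma> (t, x t, xd t) = 0) \<and>
       (\<forall>s\<in>{0..1}. \<sigma> s = (r s, x (r s), xd (r s)))" if Z: Z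
  proof -
    define r where "r s = tc (\<sigma> s)" for s
    define a where "a s = xc (\<sigma> s)" for s
    define b where "b s = yc (\<sigma> s)" for s
    define rd where "rd s = tc (D\<sigma> s)" for s
    have seq: "\<sigma> s = (r s, a s, b s)" for s by (simp add: r_def a_def b_def tc_def xc_def yc_def)
    have rder: "(r has_real_derivative rd s) (at s)" if "s \<in> {0..1}" for s
      using tc_deriv[OF dSw[OF that, of UNIV]] unfolding r_def rd_def has_real_derivative_iff_has_vector_derivative by simp
    have ader: "(a has_vector_derivative xc (D\<sigma> s)) (at s)" if "s \<in> {0..1}" for s
      using xc_deriv[OF dSw[OF that, of UNIV]] unfolding a_def by simp
    have bder: "(b has_vector_derivative yc (D\<sigma> s)) (at s)" if "s \<in> {0..1}" for s
      using yc_deriv[OF dSw[OF that, of UNIV]] unfolding b_def by simp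
    have xcD: "xc (D\<sigma> s) = rd s *\<^sub>R b s" and ycD: "yc (D\<sigma> s) = - (rd s *\<^sub>R \<Gamma> (\<sigma> s))"
      if s: "s \<in> {0..1}" for s
    proof -
      have o: "xc (D\<sigma> s) - rd s *\<^sub>R b s = 0" using Z s unfolding Z_def by (simp add: omega_h rd_def b_def)
      then show "xc (D\<sigma> s) = rd s *\<^sub>R b s" by simp
      have "\<phi> (\<sigma> s) (D\<sigma> s) = 0" using Z s unfolding Z_def by simp
      then have "yc (D\<sigma> s) + rd s *\<^sub>R \<Gamma> (\<sigma> s) = 0" using o by (simp add: phi_h rd_def b_def)
      then show "yc (D\<sigma> s) = - (rd s *\<^sub>R \<Gamma> (\<sigma> s))" by (simp add: eq_neg_iff_add_eq_0)
    qed
    have rd0: "rd s \<noteq> 0" if s: "s \<in> {0..1}" for s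
    proof
      assume "rd s = 0"
      then have "D\<sigma> s = 0" using xcD[OF s] ycD[OF s] by (simp add: rd_def tc_def xc_def yc_def prod_eq_iff)
      then show False using DS0[OF s] by simp
    qed
    have crd: "continuous_on {0..1} rd" unfolding rd_def tc_def by (intro continuous_intros cD)
    have sign: "(\<forall>s\<in>{0..1}. rd s > 0) \<or> (\<forall>s\<in>{0..1}. rd s < 0)"
    proof (rule ccontr)
      assume "\<not> ?thesis"
      then obtain s1 s2 where s12: "s1 \<in> {0..1}" "s2 \<in> {0..1}" "rd s1 \<le> 0" "rd s2 \<ge> 0" by force
      then have "rd s1 < 0" "rd s2 > 0" using rd0 by (auto simp: order.order_iff_strict)
      have conn: "connected (rd ` {0..1})" by (rule connected_continuous_image[OF crd connected_Icc])
      have "0 \<in> rd ` {0..1}"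
        by (rule connectedD_interval[OF conn, of "rd s1" "rd s2"]) (use s12 \<open>rd s1 < 0\<close> \<open>rd s2 > 0\<close> in auto)
      then show False using rd0 by auto
    qed
    have neq: "r x1 \<noteq> r y1" if "x1 \<in> {0..1}" "y1 \<in> {0..1}" "x1 < y1" for x1 y1
    proof -
      have der: "rd z \<noteq> 0 \<and> DERIV r z :> rd z" if "x1 \<le> z" "z \<le> y1" for z
        using that \<open>x1 \<in> {0..1}\<close> \<open>y1 \<in> {0..1}\<close> rd0 rder by auto
      from sign show ?thesis
      proof
        assume pos: "\<forall>s\<in>{0..1}. rd s > 0"
        have "r x1 < r y1"
          by (rule DERIV_pos_imp_increasing[OF \<open>x1 < y1\<close>]) (use der pos that in \<open>fastforce\<close>)
        then show ?thesis by simp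
      next
        assume neg: "\<forall>s\<in>{0..1}. rd s < 0"
        have "r x1 > r y1"
          by (rule DERIV_neg_imp_decreasing[OF \<open>x1 < y1\<close>]) (use der neg that in \<open>fastforce\<close>)
        then show ?thesis by simp
      qed
    qed
    have inj: "inj_on r {0..1}"
    proof (rule inj_onI)
      fix x1 y1 assume "x1 \<in> {0..1}" "y1 \<in> {0..1}" "r x1 = r y1"
      then show "x1 = y1" using neq[of x1 y1] neq[of y1 x1] by (cases x1 y1 rule: linorder_cases) auto
    qed
    define g where "g = inv_into {0..1} r"
    have gr: "g (r s) = s" if "s \<in> {0..1}" for s using inv_into_f_f[OF inj that] g_def by simp
    have cr: "continuous_on {0..1} r"
      using rder by (metis continuous_at_imp_continuous_on DERIV_isCont)
    have cg: "continuous_on (r ` {0..1}) g"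
      by (rule continuous_on_inv[OF cr compact_Icc]) (auto simp: gr)
    define x where "x = a \<circ> g"
    define xd where "xd = b \<circ> g"
    define xdd where "xdd t = - \<Gamma> (t, x t, xd t)" for t
    show ?thesis
    proof (rule exI[of _ r], rule exI[of _ x], rule exI[of _ xd], rule exI[of _ xdd], intro conjI ballI)
      fix s :: real assume s: "s \<in> {0..1}"
      show "\<exists>r'. (r has_real_derivative r') (at s within {0..1}) \<and> r' \<noteq> 0"
        using rder[OF s] rd0[OF s] has_field_derivative_at_within by blast
      show "\<sigma> s = (r s, x (r s), xd (r s))" using seq[of s] gr[OF s] by (simp add: x_def xd_def)
    next
      fix t assume t: "t \<in> r ` {0..1}"
      then obtain s0 where s0: "s0 \<in> {0..1}" "t = r s0" by auto
      have gt: "g t = s0" using gr[OF s0(1)] s0(2) by simp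
      have "(g has_derivative (*) (inverse (rd s0))) (at (r s0) within r ` {0..1})"
      proof (rule has_derivative_inverse_within)
        show "(r has_derivative (*) (rd s0)) (at s0 within {0..1})"
          using rder[OF s0(1)] has_field_derivative_at_within unfolding has_field_derivative_def by blast
        show "continuous (at (r s0) within r ` {0..1}) g"
          using cg s0(1) by (simp add: continuous_on_eq_continuous_within)
        show "(*) (inverse (rd s0)) \<circ> (*) (rd s0) = id" using rd0[OF s0(1)] by (auto simp: fun_eq_iff)
      qed (use s0 gr in auto)
      then have gder: "(g has_vector_derivative inverse (rd s0)) (at t within r ` {0..1})"
        unfolding s0(2) has_real_derivative_iff_has_vector_derivative[symmetric] has_field_derivative_def .
      have gim: "g ` (r ` {0..1}) = {0..1}" using gr by force
      have "(x has_vector_derivative (inverse (rd s0) *\<^sub>R xc (D\<sigma> s0))) (at t within r ` {0..1})"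
        unfolding x_def
        by (rule vector_diff_chain_within[OF gder]) (use ader[OF s0(1)] has_vector_derivative_at_within gt in auto)
      moreover have "inverse (rd s0) *\<^sub>R xc (D\<sigma> s0) = xd t"
        using rd0[OF s0(1)] by (simp add: xcD[OF s0(1)] xd_def gt)
      ultimately show "(x has_vector_derivative xd t) (at t within r ` {0..1})" by simp
      have "(xd has_vector_derivative (inverse (rd s0) *\<^sub>R yc (D\<sigma> s0))) (at t within r ` {0..1})"
        unfolding xd_def
        by (rule vector_diff_chain_within[OF gder]) (use bder[OF s0(1)] has_vector_derivative_at_within gt in auto)
      moreover have "inverse (rd s0) *\<^sub>R yc (D\<sigma> s0) = xdd t"
        using rd0[OF s0(1)] seq[of s0] by (simp add: ycD[OF s0(1)] xdd_def x_def xd_def gt gr[OF s0(1)] s0(2))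
      ultimately show "(xd has_vector_derivative xdd t) (at t within r ` {0..1})" by simp
      show "xdd t + \<Gamma> (t, x t, xd t) = 0" by (simp add: xdd_def)
    qed
  qed
  have R2Z: Z if R: "\<exists>(r :: real \<Rightarrow> real) (x :: real \<Rightarrow> real^'n) xd xdd.
       (\<forall>s\<in>{0..1}. \<exists>r'. (r has_real_derivative r') (at s within {0..1}) \<and> r' \<noteq> 0) \<and>
       (\<forall>t\<in>r ` {0..1}.
          (x has_vector_derivative xd t) (at t within r ` {0..1}) \<and>
          (xd has_vector_derivative xdd t) (at t within r ` {0..1}) \<and>
          xdd t + \<Gamma> (t, x t, xd t) = 0) \<and>
       (\<forall>s\<in>{0..1}. \<sigma> s = (r s, x (r s), xd (r s)))"
  proof -
    obtain r :: "real \<Rightarrow> real" and x xd xdd :: "real \<Rightarrow> real^'n" where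
      r1: "\<forall>s\<in>{0..1}. \<exists>r'. (r has_real_derivative r') (at s within {0..1}) \<and> r' \<noteq> 0" and
      r2: "\<forall>t\<in>r ` {0..1}. (x has_vector_derivative xd t) (at t within r ` {0..1}) \<and>
          (xd has_vector_derivative xdd t) (at t within r ` {0..1}) \<and> xdd t + \<Gamma> (t, x t, xd t) = 0" and
      r3: "\<forall>s\<in>{0..1}. \<sigma> s = (r s, x (r s), xd (r s))"
      using R by blast
    show Z unfolding Z_def
    proof (intro ballI)
      fix s :: real assume s: "s \<in> {0..1}"
      obtain r' where rr: "(r has_real_derivative r') (at s within {0..1})" using r1 s by blast
      have rv: "(r has_vector_derivative r') (at s within {0..1})"
        using rr has_real_derivative_iff_has_vector_derivative by blast
      have rs: "r s \<in> r ` {0..1}" using s by blast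
      have xder: "(x has_vector_derivative xd (r s)) (at (r s) within r ` {0..1})"
        and xdder: "(xd has_vector_derivative xdd (r s)) (at (r s) within r ` {0..1})"
        and ode: "xdd (r s) + \<Gamma> (r s, x (r s), xd (r s)) = 0"
        using r2 rs by auto
      have c1: "((x \<circ> r) has_vector_derivative r' *\<^sub>R xd (r s)) (at s within {0..1})"
        by (rule vector_diff_chain_within[OF rv xder])
      have c2: "((xd \<circ> r) has_vector_derivative r' *\<^sub>R xdd (r s)) (at s within {0..1})"
        by (rule vector_diff_chain_within[OF rv xdder])
      have t1: "((\<lambda>s. tc (\<sigma> s)) has_vector_derivative r') (at s within {0..1})"
        by (rule has_vector_derivative_transform[OF s _ rv]) (use r3 in \<open>auto simp: tc_def\<close>)
      have t2: "((\<lambda>s. xc (\<sigma> s)) has_vector_derivative r' *\<^sub>R xd (r s)) (at s within {0..1})"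
        by (rule has_vector_derivative_transform[OF s _ c1]) (use r3 in \<open>auto simp: xc_def\<close>)
      have t3: "((\<lambda>s. yc (\<sigma> s)) has_vector_derivative r' *\<^sub>R xdd (r s)) (at s within {0..1})"
        by (rule has_vector_derivative_transform[OF s _ c2]) (use r3 in \<open>auto simp: yc_def\<close>)
      have e1: "tc (D\<sigma> s) = r'" using uniq01[OF s tc_deriv[OF dSw[OF s]] t1] .
      have e2: "xc (D\<sigma> s) = r' *\<^sub>R xd (r s)" using uniq01[OF s xc_deriv[OF dSw[OF s]] t2] .
      have e3: "yc (D\<sigma> s) = r' *\<^sub>R xdd (r s)" using uniq01[OF s yc_deriv[OF dSw[OF s]] t3] .
      have ys: "yc (\<sigma> s) = xd (r s)" using r3 s by (simp add: yc_def)
      have om: "\<omega> (\<sigma> s) (D\<sigma> s) = 0" by (simp add: omega_h e1 e2 ys)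
      have sg: "\<sigma> s = (r s, x (r s), xd (r s))" using r3 s by simp
      have "\<phi> (\<sigma> s) (D\<sigma> s) = r' *\<^sub>R (xdd (r s) + \<Gamma> (\<sigma> s))"
        by (simp add: phi_h e1 e2 e3 ys scaleR_add_right)
      then have ph: "\<phi> (\<sigma> s) (D\<sigma> s) = 0" using ode sg by simp
      show "\<omega> (\<sigma> s) (D\<sigma> s) = 0 \<and> \<phi> (\<sigma> s) (D\<sigma> s) = 0" using om ph by simp
    qed
  qed
  show ?thesis using G2Z Z2G Z2R R2Z by blast
qed

end
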